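(* The lamplighter group $\mathbb Z_2\wr\mathbb Z$ has property (PPT).
   Context: $\mathbb Z_2\wr\mathbb Z=\left(\bigoplus_{\mathbb Z}\mathbb Z_2\right)\rtimes\mathbb Z$, where $\mathbb Z$ acts by shifting coordinates; equivalently $\langle a,t\mid a^2=1,\ [t^iat^{-i},t^jat^{-j}]=1\ \forall i,j\in\mathbb Z\rangle$. An isometric action on a metric space $Z$ is proper if for all $z\in Z$, $r>0$, $\{g: d(z,gz)\le r\}$ is finite. A quasi-tree is a geodesic metric space quasi-isometric to a simplicial tree. A group has property (PPT) if there exist unbounded proper quasi-trees $X_1,\ldots,X_l$ on which it acts isometrically and cocompactly such that the diagonal action on $\prod_{i=1}^lX_i$ with the $\ell^1$-metric is proper. *)

theory Defs
  imports "HOL-Analysis.Analysis" "HOL-Algebra.Group_Action"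
begin

text \<open>Elements are pairs (f, n): f a finitely supported configuration of lamps
  (f i = True meaning the lamp at i is on, i.e. the Z_2 coordinate is 1) and n in Z.
  Multiplication: (f,n)(g,m) = (f + shift^n g, n+m), where (shift^n g) i = g (i - n)
  and + in Z_2 is exclusive or.\<close>

definition lamplighter :: "((int \<Rightarrow> bool) \<times> int) monoid" where
  "lamplighter =
     \<lparr> carrier = {(f, n). finite {i. f i}},
       mult = (\<lambda>(f, n) (g, m). ((\<lambda>i. f i \<noteq> g (i - n)), n + m)),
       one = ((\<lambda>i. False), 0) \<rparr>"

definition proper_metric :: "'a metric \<Rightarrow> bool" where
  "proper_metric m \<longleftrightarrow>
     (\<forall>x \<in> mspace m. \<forall>r. compactin (mtopology_of m) (mcball_of m x r))"

definition unbounded_metric :: "'a metric \<Rightarrow> bool" where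
  "unbounded_metric m \<longleftrightarrow> \<not> Metric_space.mbounded (mspace m) (mdist m) (mspace m)"

definition geodesic_metric :: "'a metric \<Rightarrow> bool" where
  "geodesic_metric m \<longleftrightarrow>
     (\<forall>x \<in> mspace m. \<forall>y \<in> mspace m. \<exists>\<gamma>.
        \<gamma> 0 = x \<and> \<gamma> (mdist m x y) = y \<and>
        (\<forall>t \<in> {0..mdist m x y}. \<gamma> t \<in> mspace m) \<and>
        (\<forall>s \<in> {0..mdist m x y}. \<forall>t \<in> {0..mdist m x y}. mdist m (\<gamma> s) (\<gamma> t) = \<bar>s - t\<bar>))"

definition quasi_isometric ::
    "'a set \<Rightarrow> ('a \<Rightarrow> 'a \<Rightarrow> real) \<Rightarrow> 'b set \<Rightarrow> ('b \<Rightarrow> 'b \<Rightarrow> real) \<Rightarrow> bool" where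
  "quasi_isometric S d T e \<longleftrightarrow>
     (\<exists>f L C. f ` S \<subseteq> T \<and> L \<ge> 1 \<and> C \<ge> 0 \<and>
        (\<forall>x \<in> S. \<forall>y \<in> S. d x y / L - C \<le> e (f x) (f y) \<and> e (f x) (f y) \<le> L * d x y + C) \<and>
        (\<forall>z \<in> T. \<exists>x \<in> S. e z (f x) \<le> C))"

definition walk :: "('v \<Rightarrow> 'v \<Rightarrow> bool) \<Rightarrow> 'v list \<Rightarrow> bool" where
  "walk E p \<longleftrightarrow> p \<noteq> [] \<and> (\<forall>i. Suc i < length p \<longrightarrow> E (p ! i) (p ! Suc i))"

definition graph_dist :: "('v \<Rightarrow> 'v \<Rightarrow> bool) \<Rightarrow> 'v \<Rightarrow> 'v \<Rightarrow> real" where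
  "graph_dist E u v =
     real (LEAST n. \<exists>p. walk E p \<and> length p = Suc n \<and> hd p = u \<and> last p = v)"

definition simplicial_tree :: "'v set \<Rightarrow> ('v \<Rightarrow> 'v \<Rightarrow> bool) \<Rightarrow> bool" where
  "simplicial_tree V E \<longleftrightarrow>
     V \<noteq> {} \<and>
     (\<forall>u v. E u v \<longrightarrow> u \<in> V \<and> v \<in> V \<and> u \<noteq> v \<and> E v u) \<and>
     (\<forall>u \<in> V. \<forall>v \<in> V. \<exists>p. walk E p \<and> hd p = u \<and> last p = v) \<and>
     \<not> (\<exists>p. walk E p \<and> distinct p \<and> length p \<ge> 3 \<and> E (last p) (hd p))"

text \<open>A quasi-tree: geodesic metric space quasi-isometric to a simplicial tree
  (equipped with its combinatorial path metric on vertices, which is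
  quasi-isometric to its geometric realisation). Tree vertices are taken in type real
  (no loss of generality).\<close>

definition quasi_tree :: "'a metric \<Rightarrow> bool" where
  "quasi_tree m \<longleftrightarrow> geodesic_metric m \<and>
     (\<exists>(V :: real set) E. simplicial_tree V E \<and>
        quasi_isometric (mspace m) (mdist m) V (graph_dist E))"

definition isometric_action :: "('g, 'c) monoid_scheme \<Rightarrow> 'a metric \<Rightarrow> ('g \<Rightarrow> 'a \<Rightarrow> 'a) \<Rightarrow> bool" where
  "isometric_action G m \<phi> \<longleftrightarrow> group_action G (mspace m) \<phi> \<and>
     (\<forall>g \<in> carrier G. \<forall>x \<in> mspace m. \<forall>y \<in> mspace m. mdist m (\<phi> g x) (\<phi> g y) = mdist m x y)"

definition cocompact_action :: "('g, 'c) monoid_scheme \<Rightarrow> 'a metric \<Rightarrow> ('g \<Rightarrow> 'a \<Rightarrow> 'a) \<Rightarrow> bool" where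
  "cocompact_action G m \<phi> \<longleftrightarrow>
     (\<exists>K. compactin (mtopology_of m) K \<and> (\<Union>g \<in> carrier G. \<phi> g ` K) = mspace m)"

text \<open>Property (PPT), with the spaces X_1..X_l indexed by i < l; all carriers
  live in type real (no loss of generality for proper metric spaces).\<close>

definition PPT :: "('g, 'c) monoid_scheme \<Rightarrow> bool" where
  "PPT G \<longleftrightarrow> (\<exists>(l :: nat) (X :: nat \<Rightarrow> real metric) (\<phi> :: nat \<Rightarrow> 'g \<Rightarrow> real \<Rightarrow> real).
     (\<forall>i < l. unbounded_metric (X i) \<and> proper_metric (X i) \<and> quasi_tree (X i) \<and>
              isometric_action G (X i) (\<phi> i) \<and> cocompact_action G (X i) (\<phi> i)) \<and>
     (\<forall>z. (\<forall>i < l. z i \<in> mspace (X i)) \<longrightarrow> (\<forall>r > 0.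
        finite {g \<in> carrier G. (\<Sum>i < l. mdist (X i) (z i) (\<phi> i g (z i))) \<le> r})))"

end

theory Submission
  imports Defs
begin


type_synonym pt = "real \<times> (int \<Rightarrow> bool)"

definition TM :: "pt set" where
  "TM = {(h, a). finite {i. a i} \<and> (\<forall>i. a i \<longrightarrow> real_of_int i < h)}"

definition gp :: "pt \<Rightarrow> pt \<Rightarrow> real" where
  "gp x y = (if snd x = snd y then min (fst x) (fst y)
     else min (min (fst x) (fst y)) (of_int (Min {i. snd x i \<noteq> snd y i})))"

definition td :: "pt \<Rightarrow> pt \<Rightarrow> real" where
  "td x y = fst x + fst y - 2 * gp x y"

abbreviation fin :: "pt \<Rightarrow> bool" where "fin x \<equiv> finite {i. snd x i}"

lemma TM_fin: "x \<in> TM \<Longrightarrow> fin x"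
  by (auto simp: TM_def)

lemma TM_lt: "x \<in> TM \<Longrightarrow> snd x i \<Longrightarrow> real_of_int i < fst x"
  by (auto simp: TM_def)

lemma gp_ge:
  assumes "fin x" "fin y"
  shows "t \<le> gp x y \<longleftrightarrow> t \<le> fst x \<and> t \<le> fst y \<and> (\<forall>i. real_of_int i < t \<longrightarrow> snd x i = snd y i)"
proof (cases "snd x = snd y")
  case True
  then show ?thesis by (simp add: gp_def)
next
  case False
  define D where "D = {i. snd x i \<noteq> snd y i}"
  have "D \<subseteq> {i. snd x i} \<union> {i. snd y i}" by (auto simp: D_def)
  hence fD: "finite D" using assms finite_subset by blast
  have neD: "D \<noteq> {}" using False by (auto simp: D_def)
  have "t \<le> of_int (Min D) \<longleftrightarrow> (\<forall>i. real_of_int i < t \<longrightarrow> snd x i = snd y i)"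
  proof
    assume H: "t \<le> of_int (Min D)"
    show "\<forall>i. real_of_int i < t \<longrightarrow> snd x i = snd y i"
    proof (intro allI impI)
      fix i assume "real_of_int i < t"
      hence "i < Min D" using H by linarith
      show "snd x i = snd y i"
      proof (rule ccontr)
        assume "snd x i \<noteq> snd y i"
        hence "i \<in> D" by (simp add: D_def)
        hence "Min D \<le> i" using fD by simp
        thus False using \<open>i < Min D\<close> by simp
      qed
    qed
  next
    assume H: "\<forall>i. real_of_int i < t \<longrightarrow> snd x i = snd y i"
    have "Min D \<in> D" using fD neD by simp
    hence "\<not> real_of_int (Min D) < t" using H by (auto simp: D_def)
    thus "t \<le> of_int (Min D)" by linarith
  qed
  thus ?thesis using False by (simp add: gp_def D_def)
qed

lemma gp_le1: "gp x y \<le> fst x" unfolding gp_def by (auto intro: min.coboundedI1)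
lemma gp_le2: "gp x y \<le> fst y" unfolding gp_def by (auto intro: min.coboundedI1 min.coboundedI2)

lemma gp_sym: "gp x y = gp y x"
  unfolding gp_def by (auto simp: eq_commute min.commute)

lemma gp_agree:
  assumes "fin x" "fin y" "real_of_int i < gp x y" shows "snd x i = snd y i"
proof -
  have "gp x y \<le> gp x y" by simp
  hence "\<forall>i. real_of_int i < gp x y \<longrightarrow> snd x i = snd y i"
    unfolding gp_ge[OF assms(1,2)] by blast
  thus ?thesis using assms(3) by blast
qed

lemma gp_diff:
  assumes "fin x" "fin y" "snd x i \<noteq> snd y i" shows "gp x y \<le> real_of_int i"
proof (rule ccontr)
  assume "\<not> gp x y \<le> real_of_int i"
  hence "real_of_int i < gp x y" by simp
  thus False using gp_agree[OF assms(1,2)] assms(3) by blast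
qed

lemma gp_ultra:
  assumes "fin x" "fin y" "fin z"
  shows "min (gp x y) (gp y z) \<le> gp x z"
proof -
  let ?t = "min (gp x y) (gp y z)"
  have "?t \<le> gp x y" "?t \<le> gp y z" by auto
  hence a: "?t \<le> fst x \<and> ?t \<le> fst y \<and> (\<forall>i. real_of_int i < ?t \<longrightarrow> snd x i = snd y i)"
    and b: "?t \<le> fst y \<and> ?t \<le> fst z \<and> (\<forall>i. real_of_int i < ?t \<longrightarrow> snd y i = snd z i)"
    using gp_ge[OF assms(1,2), of ?t] gp_ge[OF assms(2,3), of ?t] by blast+
  show ?thesis using a b gp_ge[OF assms(1,3), of ?t] by auto
qed

lemma td_nonneg: "0 \<le> td x y"
  using gp_le1[of x y] gp_le2[of x y] by (simp add: td_def)

lemma td_sym: "td x y = td y x"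
  by (simp add: td_def gp_sym)

lemma td_ge_abs: "\<bar>fst x - fst y\<bar> \<le> td x y"
  using gp_le1[of x y] gp_le2[of x y] by (simp add: td_def)

lemma td_zero:
  assumes "x \<in> TM" "y \<in> TM" "td x y = 0" shows "x = y"
proof -
  have g: "gp x y = fst x" "gp x y = fst y"
    using assms(3) gp_le1[of x y] gp_le2[of x y] by (auto simp: td_def)
  have "snd x i = snd y i" for i
  proof (cases "real_of_int i < fst x")
    case True thus ?thesis using gp_agree[OF TM_fin[OF assms(1)] TM_fin[OF assms(2)]] g by auto
  next
    case False thus ?thesis using TM_lt[OF assms(1), of i] TM_lt[OF assms(2), of i] g by auto
  qed
  hence "snd x = snd y" by auto
  thus ?thesis using g by (simp add: prod_eq_iff)
qed

lemma td_triangle: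
  assumes "fin x" "fin y" "fin z"
  shows "td x z \<le> td x y + td y z"
  using gp_ultra[OF assms] gp_le1[of y z] gp_le2[of x y]
  by (simp add: td_def min_def split: if_splits)

lemma td_self: "td x x = 0" by (simp add: td_def gp_def)

lemma Metric_TM: "Metric_space TM td"
proof
  show "td x y = 0 \<longleftrightarrow> x = y" if "x \<in> TM" "y \<in> TM" for x y
    using td_zero[OF that] td_self by blast
qed (auto simp: td_nonneg td_sym td_triangle TM_fin)



definition seg :: "(int \<Rightarrow> bool) \<Rightarrow> real \<Rightarrow> pt" where
  "seg a s = (s, \<lambda>i. a i \<and> real_of_int i < s)"

lemma seg_fin: "finite {i. a i} \<Longrightarrow> fin (seg a s)"
  by (rule finite_subset[of _ "{i. a i}"]) (auto simp: seg_def)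

lemma seg_TM: "finite {i. a i} \<Longrightarrow> seg a s \<in> TM"
  using seg_fin[of a s] by (auto simp: TM_def seg_def)

lemma seg_fst[simp]: "fst (seg a s) = s" by (simp add: seg_def)

lemma seg_self: "x \<in> TM \<Longrightarrow> seg (snd x) (fst x) = x"
  using TM_lt[of x] by (auto simp: seg_def prod_eq_iff)

lemma gp_seg:
  assumes "finite {i. a i}" shows "gp (seg a s) (seg a t) = min s t"
proof -
  have "min s t \<le> gp (seg a s) (seg a t)"
    using gp_ge[OF seg_fin[OF assms] seg_fin[OF assms], of "min s t" s t]
    by (auto simp: seg_def)
  thus ?thesis using gp_le1[of "seg a s" "seg a t"] gp_le2[of "seg a s" "seg a t"] by simp
qed

lemma td_seg: "finite {i. a i} \<Longrightarrow> td (seg a s) (seg a t) = \<bar>s - t\<bar>"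
  by (simp add: td_def gp_seg)

lemma gp_branch:
  assumes "fin p" "fin q" "gp p q < fst p" "gp p q < fst q"
  shows "\<exists>i. real_of_int i = gp p q \<and> snd p i \<noteq> snd q i"
proof -
  have ne: "snd p \<noteq> snd q" using assms(3,4) by (auto simp: gp_def)
  define D where "D = {i. snd p i \<noteq> snd q i}"
  have "D \<subseteq> {i. snd p i} \<union> {i. snd q i}" by (auto simp: D_def)
  hence fD: "finite D" using assms finite_subset by blast
  have neD: "D \<noteq> {}" using ne by (auto simp: D_def)
  have "gp p q = of_int (Min D)" using ne assms(3,4) by (auto simp: gp_def D_def)
  moreover have "Min D \<in> D" using fD neD by simp
  ultimately show ?thesis by (auto simp: D_def)
qed

lemma gp_seg_cross:
  assumes p: "p \<in> TM" and q: "q \<in> TM"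
    and s: "gp p q \<le> s" "s \<le> fst p" and t: "gp p q \<le> t" "t \<le> fst q"
  shows "gp (seg (snd p) s) (seg (snd q) t) = gp p q"
proof -
  have fp: "fin p" and fq: "fin q" using p q TM_fin by auto
  have f1: "fin (seg (snd p) s)" and f2: "fin (seg (snd q) t)" using seg_fin fp fq by auto
  have ge: "gp p q \<le> gp (seg (snd p) s) (seg (snd q) t)"
    unfolding gp_ge[OF f1 f2] using s t gp_agree[OF fp fq] by (auto simp: seg_def)
  have le: "gp (seg (snd p) s) (seg (snd q) t) \<le> gp p q"
  proof (cases "s = gp p q \<or> t = gp p q")
    case True
    thus ?thesis using gp_le1[of "seg (snd p) s" "seg (snd q) t"] gp_le2[of "seg (snd p) s" "seg (snd q) t"]
      by auto
  next
    case False
    hence "gp p q < s" "gp p q < t" using s t by auto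
    hence "gp p q < fst p" "gp p q < fst q" using s t by auto
    then obtain i where i: "real_of_int i = gp p q" "snd p i \<noteq> snd q i"
      using gp_branch[OF fp fq] by blast
    have "snd (seg (snd p) s) i \<noteq> snd (seg (snd q) t) i"
      using i \<open>gp p q < s\<close> \<open>gp p q < t\<close> by (auto simp: seg_def)
    thus ?thesis using gp_diff[OF f1 f2] i(1) by metis
  qed
  show ?thesis using ge le by simp
qed

definition act :: "(int \<Rightarrow> bool) \<times> int \<Rightarrow> pt \<Rightarrow> pt" where
  "act g x = (fst x + of_int (snd g),
     \<lambda>i. real_of_int i < fst x + of_int (snd g) \<and> (snd x (i - snd g) \<noteq> fst g i))"

lemma act_fin:
  assumes "finite {i. fst g i}" "fin x" shows "fin (act g x)"
proof -
  have "{i. snd (act g x) i} \<subseteq> (\<lambda>j. j + snd g) ` {j. snd x j} \<union> {i. fst g i}"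
  proof
    fix i assume "i \<in> {i. snd (act g x) i}"
    hence "snd x (i - snd g) \<noteq> fst g i" by (simp add: act_def)
    hence "snd x (i - snd g) \<or> fst g i" by blast
    thus "i \<in> (\<lambda>j. j + snd g) ` {j. snd x j} \<union> {i. fst g i}"
      by (metis (mono_tags, lifting) UnI1 UnI2 diff_add_cancel image_eqI mem_Collect_eq)
  qed
  thus ?thesis using assms finite_subset by blast
qed

lemma act_TM: "finite {i. fst g i} \<Longrightarrow> x \<in> TM \<Longrightarrow> act g x \<in> TM"
  using act_fin[of g x] TM_fin[of x] by (auto simp: TM_def act_def)

lemma act_fst[simp]: "fst (act g x) = fst x + of_int (snd g)" by (simp add: act_def)

lemma gp_act:
  assumes g: "finite {i. fst g i}" and x: "fin x" and y: "fin y"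
  shows "gp (act g x) (act g y) = gp x y + of_int (snd g)"
proof -
  have fx: "fin (act g x)" and fy: "fin (act g y)" using act_fin assms by auto
  have key: "t \<le> gp (act g x) (act g y) \<longleftrightarrow> t - of_int (snd g) \<le> gp x y" for t
  proof -
    have A: "(\<forall>i. real_of_int i < t \<longrightarrow> snd (act g x) i = snd (act g y) i) \<longleftrightarrow>
             (\<forall>i. real_of_int i < t - of_int (snd g) \<longrightarrow> snd x i = snd y i)"
      if "t \<le> fst x + of_int (snd g)" "t \<le> fst y + of_int (snd g)"
    proof
      assume H: "\<forall>i. real_of_int i < t \<longrightarrow> snd (act g x) i = snd (act g y) i"
      show "\<forall>i. real_of_int i < t - of_int (snd g) \<longrightarrow> snd x i = snd y i"
      proof (intro allI impI)
        fix i assume "real_of_int i < t - of_int (snd g)"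
        hence "real_of_int (i + snd g) < t" by simp
        hence "snd (act g x) (i + snd g) = snd (act g y) (i + snd g)" using H by blast
        thus "snd x i = snd y i" using that \<open>real_of_int (i + snd g) < t\<close>
          by (auto simp: act_def)
      qed
    next
      assume H: "\<forall>i. real_of_int i < t - of_int (snd g) \<longrightarrow> snd x i = snd y i"
      show "\<forall>i. real_of_int i < t \<longrightarrow> snd (act g x) i = snd (act g y) i"
      proof (intro allI impI)
        fix i assume "real_of_int i < t"
        hence "real_of_int (i - snd g) < t - of_int (snd g)" by simp
        hence "snd x (i - snd g) = snd y (i - snd g)" using H by blast
        thus "snd (act g x) i = snd (act g y) i" using that \<open>real_of_int i < t\<close>
          by (auto simp: act_def)
      qed
    qed
    show ?thesis
      unfolding gp_ge[OF fx fy] gp_ge[OF x y] using A by auto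
  qed
  show ?thesis using key[of "gp (act g x) (act g y)"] key[of "gp x y + of_int (snd g)"] by simp
qed

lemma td_act:
  "finite {i. fst g i} \<Longrightarrow> fin x \<Longrightarrow> fin y \<Longrightarrow> td (act g x) (act g y) = td x y"
  by (simp add: td_def gp_act)

lemma act_one: "x \<in> TM \<Longrightarrow> act (\<lambda>i. False, 0) x = x"
  using TM_lt[of x] by (auto simp: act_def prod_eq_iff)

lemma act_comp:
  "act ((\<lambda>i. f i \<noteq> g (i - n)), n + m) x = act (f, n) (act (g, m) x)"
  by (auto simp: act_def prod_eq_iff algebra_simps)

lemma LL_carrier: "g \<in> carrier lamplighter \<longleftrightarrow> finite {i. fst g i}"
  by (cases g) (simp add: lamplighter_def)

lemma LL_mult: "(f, n) \<otimes>\<^bsub>lamplighter\<^esub> (g, m) = ((\<lambda>i. f i \<noteq> g (i - n)), n + m)"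
  by (simp add: lamplighter_def)

lemma LL_one: "\<one>\<^bsub>lamplighter\<^esub> = (\<lambda>i. False, 0)"
  by (simp add: lamplighter_def)

lemma fin_xor:
  fixes f g :: "int \<Rightarrow> bool" and n :: int
  assumes "finite {i. f i}" "finite {i. g i}"
  shows "finite {i. f i \<noteq> g (i - n)}"
proof -
  have "{i. f i \<noteq> g (i - n)} \<subseteq> {i. f i} \<union> (\<lambda>j. j + n) ` {j. g j}"
    by auto (metis diff_add_cancel image_eqI mem_Collect_eq)
  thus ?thesis using assms finite_subset by blast
qed

lemma fin_xor':
  fixes f g :: "int \<Rightarrow> bool" and n :: int
  assumes "finite {i. f i}" "finite {i. g i}"
  shows "finite {i. f i = (\<not> g (i - n))}"
  using fin_xor[OF assms, of n] by simp

lemma fin_shift: "finite {i. (f :: int \<Rightarrow> bool) i} \<Longrightarrow> finite {i. f (i + (n::int))}"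
proof -
  assume "finite {i. f i}"
  moreover have "{i. f (i + n)} = (\<lambda>j. j - n) ` {i. f i}" by force
  ultimately show ?thesis by simp
qed

lemma LL_group: "group lamplighter"
proof (rule groupI)
  fix x y assume "x \<in> carrier lamplighter" "y \<in> carrier lamplighter"
  thus "x \<otimes>\<^bsub>lamplighter\<^esub> y \<in> carrier lamplighter"
    by (cases x, cases y) (simp add: LL_mult LL_carrier fin_xor')
next
  show "\<one>\<^bsub>lamplighter\<^esub> \<in> carrier lamplighter" by (simp add: LL_one LL_carrier)
next
  fix x y z assume "x \<in> carrier lamplighter" "y \<in> carrier lamplighter" "z \<in> carrier lamplighter"
  show "x \<otimes>\<^bsub>lamplighter\<^esub> y \<otimes>\<^bsub>lamplighter\<^esub> z = x \<otimes>\<^bsub>lamplighter\<^esub> (y \<otimes>\<^bsub>lamplighter\<^esub> z)"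
    by (cases x, cases y, cases z) (auto simp: LL_mult algebra_simps)
next
  fix x assume "x \<in> carrier lamplighter"
  show "\<one>\<^bsub>lamplighter\<^esub> \<otimes>\<^bsub>lamplighter\<^esub> x = x"
    by (cases x) (simp add: LL_one LL_mult)
next
  fix x assume x: "x \<in> carrier lamplighter"
  obtain f n where xe: "x = (f, n)" by (cases x)
  have "(\<lambda>i. f (i + n), - n) \<in> carrier lamplighter"
    using x xe by (simp add: LL_carrier fin_shift)
  moreover have "(\<lambda>i. f (i + n), - n) \<otimes>\<^bsub>lamplighter\<^esub> x = \<one>\<^bsub>lamplighter\<^esub>"
    by (simp add: xe LL_mult LL_one)
  ultimately show "\<exists>y\<in>carrier lamplighter. y \<otimes>\<^bsub>lamplighter\<^esub> x = \<one>\<^bsub>lamplighter\<^esub>" by blast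
qed

definition sig :: "(int \<Rightarrow> bool) \<times> int \<Rightarrow> (int \<Rightarrow> bool) \<times> int" where
  "sig g = (\<lambda>i. fst g (- i), - snd g)"

lemma sig_sig[simp]: "sig (sig g) = g" by (simp add: sig_def)

lemma sig_carrier: "g \<in> carrier lamplighter \<Longrightarrow> sig g \<in> carrier lamplighter"
proof -
  assume "g \<in> carrier lamplighter"
  hence "finite {i. fst g i}" by (simp add: LL_carrier)
  moreover have "{i. fst g (- i)} = uminus ` {i. fst g i}" by force
  ultimately show ?thesis by (simp add: LL_carrier sig_def)
qed

lemma sig_mult: "sig (g \<otimes>\<^bsub>lamplighter\<^esub> h) = sig g \<otimes>\<^bsub>lamplighter\<^esub> sig h"
proof -
  obtain a b c d where g: "g = (a, b)" and h: "h = (c, d)" by (cases g, cases h)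
  have e: "\<And>i. - i - b = - b - (i::int)" by simp
  show ?thesis by (simp add: g h LL_mult sig_def e)
qed

lemma sig_one: "sig \<one>\<^bsub>lamplighter\<^esub> = \<one>\<^bsub>lamplighter\<^esub>"
  by (simp add: LL_one sig_def)

lemma act_mult:
  "act (g \<otimes>\<^bsub>lamplighter\<^esub> h) x = act g (act h x)"
  by (cases g, cases h) (simp only: LL_mult act_comp)

lemma act_LL_one: "x \<in> TM \<Longrightarrow> act \<one>\<^bsub>lamplighter\<^esub> x = x"
  by (simp add: LL_one act_one)



definition C0 :: "(int \<Rightarrow> bool) set" where "C0 = {a. finite {i. a i}}"

lemma countable_C0: "countable C0"
proof (rule countable_image_inj_on)
  show "countable ((\<lambda>a. {i. a i}) ` C0)"
    by (rule countable_subset[OF _ countable_Collect_finite]) (auto simp: C0_def)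
  show "inj_on (\<lambda>a. {i. a i}) C0"
    by (auto simp: inj_on_def fun_eq_iff)
qed

definition enc :: "pt \<Rightarrow> real" where
  "enc x = 4 * real (to_nat_on C0 (snd x)) + arctan (fst x)"

lemma enc_inj: "inj_on enc TM"
proof
  fix x y assume x: "x \<in> TM" and y: "y \<in> TM" and e: "enc x = enc y"
  define k1 where "k1 = to_nat_on C0 (snd x)"
  define k2 where "k2 = to_nat_on C0 (snd y)"
  have b1: "-2 < arctan (fst x)" "arctan (fst x) < 2" and b2: "-2 < arctan (fst y)" "arctan (fst y) < 2"
    using arctan_bounded[of "fst x"] arctan_bounded[of "fst y"] pi_less_4 by auto
  have "4 * real k1 + arctan (fst x) = 4 * real k2 + arctan (fst y)"
    using e by (simp add: enc_def k1_def k2_def)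
  hence "real k1 < real (Suc k2)" "real k2 < real (Suc k1)" using b1 b2 by simp_all
  hence "k1 < Suc k2" "k2 < Suc k1" by (simp_all only: of_nat_less_iff)
  hence "k1 = k2" by linarith
  hence "arctan (fst x) = arctan (fst y)" using e by (simp add: enc_def k1_def k2_def)
  hence f: "fst x = fst y" by (simp add: arctan_eq_iff)
  have "snd x \<in> C0" "snd y \<in> C0" using x y TM_fin by (auto simp: C0_def)
  hence "snd x = snd y" using \<open>k1 = k2\<close> inj_on_to_nat_on[OF countable_C0]
    unfolding k1_def k2_def inj_on_def by blast
  thus "x = y" using f by (simp add: prod_eq_iff)
qed

definition dec :: "real \<Rightarrow> pt" where "dec = inv_into TM enc"

lemma dec_enc[simp]: "x \<in> TM \<Longrightarrow> dec (enc x) = x"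
  by (simp add: dec_def enc_inj inv_into_f_f)

definition XS :: "real set" where "XS = enc ` TM"

definition Xd :: "real \<Rightarrow> real \<Rightarrow> real" where "Xd x y = td (dec x) (dec y)"

lemma dec_XS: "x \<in> XS \<Longrightarrow> dec x \<in> TM"
  by (auto simp: XS_def)

lemma enc_dec: "x \<in> XS \<Longrightarrow> enc (dec x) = x"
  by (auto simp: XS_def)

lemma enc_XS: "p \<in> TM \<Longrightarrow> enc p \<in> XS"
  by (simp add: XS_def)

lemma Metric_X: "Metric_space XS Xd"
proof
  show "0 \<le> Xd x y" for x y by (simp add: Xd_def td_nonneg)
  show "Xd x y = Xd y x" for x y by (simp add: Xd_def td_sym)
  show "Xd x y = 0 \<longleftrightarrow> x = y" if "x \<in> XS" "y \<in> XS" for x y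
    using td_zero[OF dec_XS dec_XS] td_self enc_dec that unfolding Xd_def by metis
  show "Xd x z \<le> Xd x y + Xd y z" if "x \<in> XS" "y \<in> XS" "z \<in> XS" for x y z
    using td_triangle TM_fin dec_XS that unfolding Xd_def by blast
qed

definition XM :: "real metric" where "XM = metric (XS, Xd)"

lemma XM_space[simp]: "mspace XM = XS"
  by (simp add: XM_def Metric_space.mspace_metric[OF Metric_X])

lemma XM_dist[simp]: "mdist XM = Xd"
  by (simp add: XM_def Metric_space.mdist_metric[OF Metric_X])

lemma Xd_enc[simp]: "p \<in> TM \<Longrightarrow> q \<in> TM \<Longrightarrow> Xd (enc p) (enc q) = td p q"
  by (simp add: Xd_def)

lemma XS_E: "x \<in> XS \<Longrightarrow> (\<And>p. p \<in> TM \<Longrightarrow> x = enc p \<Longrightarrow> P) \<Longrightarrow> P"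
  by (auto simp: XS_def)

section \<open>Compactness\<close>

lemma seg_cont:
  assumes "finite {i. a i}"
  shows "continuous_map euclideanreal (mtopology_of XM) (\<lambda>s. enc (seg a s))"
proof -
  have "Lipschitz_continuous_map euclidean_metric XM (\<lambda>s. enc (seg a s))"
    unfolding Lipschitz_continuous_map_def
  proof
    show "(\<lambda>s. enc (seg a s)) \<in> mspace euclidean_metric \<rightarrow> mspace XM"
      using seg_TM[OF assms] by (simp add: enc_XS)
    show "\<exists>B. \<forall>x\<in>mspace euclidean_metric. \<forall>y\<in>mspace euclidean_metric.
        mdist XM (enc (seg a x)) (enc (seg a y)) \<le> B * mdist euclidean_metric x y"
      by (rule exI[of _ 1]) (simp add: seg_TM[OF assms] td_seg[OF assms] dist_real_def)
  qed
  thus ?thesis using Lipschitz_continuous_imp_continuous_map by fastforce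
qed

lemma seg_compact:
  assumes "finite {i. a i}"
  shows "compactin (mtopology_of XM) ((\<lambda>s. enc (seg a s)) ` {lo..hi})"
  by (rule image_compactin[OF _ seg_cont[OF assms]]) simp

lemma finite_agree:
  assumes "finite I" shows "finite {b :: int \<Rightarrow> bool. \<forall>i. i \<notin> I \<longrightarrow> b i = c i}"
proof -
  have "{b. \<forall>i. i \<notin> I \<longrightarrow> b i = c i} \<subseteq> (\<lambda>S i. if i \<in> I then i \<in> S else c i) ` Pow I"
  proof
    fix b assume b: "b \<in> {b. \<forall>i. i \<notin> I \<longrightarrow> b i = c i}"
    have "b = (\<lambda>i. if i \<in> I then i \<in> {j \<in> I. b j} else c i)"
      using b by (auto simp: fun_eq_iff)
    thus "b \<in> (\<lambda>S i. if i \<in> I then i \<in> S else c i) ` Pow I" by blast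
  qed
  thus ?thesis using assms finite_subset by blast
qed

lemma finite_int_range: "finite {i :: int. lo \<le> real_of_int i \<and> real_of_int i \<le> hi}"
proof -
  have "{i :: int. lo \<le> real_of_int i \<and> real_of_int i \<le> hi} \<subseteq> {\<lfloor>lo\<rfloor> .. \<lceil>hi\<rceil>}"
    by (auto simp: floor_le_iff le_ceiling_iff)
  thus ?thesis using finite_subset by blast
qed

lemma proper_XM: "proper_metric XM"
  unfolding proper_metric_def
proof (intro ballI allI)
  fix x r assume "x \<in> mspace XM"
  then obtain p where p: "p \<in> TM" "x = enc p" by (auto elim: XS_E)
  define I where "I = {i :: int. fst p - r \<le> real_of_int i \<and> real_of_int i \<le> fst p + r}"
  define B where "B = {b \<in> C0. \<forall>i. i \<notin> I \<longrightarrow> b i = snd p i}"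
  have fI: "finite I" unfolding I_def by (rule finite_int_range)
  have "finite {b. \<forall>i. i \<notin> I \<longrightarrow> b i = snd p i}" by (rule finite_agree[OF fI])
  hence fB: "finite B" unfolding B_def by (rule finite_subset[rotated]) auto
  define K where "K = (\<Union>b\<in>B. (\<lambda>s. enc (seg b s)) ` {fst p - r .. fst p + r})"
  have cK: "compactin (mtopology_of XM) K"
    unfolding K_def
    by (rule compactin_Union) (use fB seg_compact in \<open>auto simp: B_def C0_def\<close>)
  have sub: "mcball_of XM x r \<subseteq> K"
  proof
    fix y assume "y \<in> mcball_of XM x r"
    hence y: "y \<in> XS" "Xd x y \<le> r" by simp_all
    obtain q where q: "q \<in> TM" "y = enc q" using y(1) by (auto elim: XS_E)
    have d: "td p q \<le> r" using y(2) p q by simp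
    have fq: "fst q \<in> {fst p - r .. fst p + r}" using td_ge_abs[of p q] d by auto
    have "snd q \<in> B"
    proof -
      have "snd q \<in> C0" using q TM_fin by (auto simp: C0_def)
      moreover have "snd q i = snd p i" if "i \<notin> I" for i
      proof (cases "real_of_int i < fst p - r")
        case True
        have "gp p q \<ge> fst p - r" using d fq by (simp add: td_def)
        thus ?thesis using gp_agree[OF TM_fin[OF p(1)] TM_fin[OF q(1)], of i] True by auto
      next
        case False
        hence "real_of_int i > fst p + r" using that by (auto simp: I_def)
        hence "\<not> snd q i" "\<not> snd p i" using TM_lt[OF q(1), of i] TM_lt[OF p(1), of i] fq
          d td_nonneg[of p q] by auto
        thus ?thesis by simp
      qed
      ultimately show ?thesis by (auto simp: B_def)
    qed
    moreover have "y = enc (seg (snd q) (fst q))" using q seg_self by simp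
    ultimately show "y \<in> K" unfolding K_def using fq by blast
  qed
  have cl: "closedin (mtopology_of XM) (mcball_of XM x r)"
    unfolding mtopology_of_def mcball_of_def
    by (rule Metric_space.closedin_mcball[OF Metric_space_mspace_mdist])
  show "compactin (mtopology_of XM) (mcball_of XM x r)"
    by (rule closed_compactin[OF cK sub cl])
qed

lemma unbounded_XM: "unbounded_metric XM"
  unfolding unbounded_metric_def
proof
  assume "Metric_space.mbounded (mspace XM) (mdist XM) (mspace XM)"
  hence "Metric_space.mbounded XS Xd XS" by simp
  then obtain x B where xB: "XS \<subseteq> Metric_space.mcball XS Xd x B"
    unfolding Metric_space.mbounded_def[OF Metric_X] by blast
  have z: "seg (\<lambda>i. False) t \<in> TM" for t by (rule seg_TM) simp
  have "enc (seg (\<lambda>i. False) 0) \<in> XS" using z enc_XS by blast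
  hence "x \<in> XS" using xB by (auto simp: Metric_space.mcball_def[OF Metric_X])
  then obtain p where p: "p \<in> TM" "x = enc p" by (auto elim: XS_E)
  let ?t = "fst p + \<bar>B\<bar> + 1"
  have "enc (seg (\<lambda>i. False) ?t) \<in> XS" using z enc_XS by blast
  hence "td p (seg (\<lambda>i. False) ?t) \<le> B"
    using xB p z by (auto simp: Metric_space.mcball_def[OF Metric_X])
  moreover have "\<bar>fst p - ?t\<bar> \<le> td p (seg (\<lambda>i. False) ?t)"
    using td_ge_abs[of p "seg (\<lambda>i. False) ?t"] by simp
  ultimately show False by linarith
qed

section \<open>Geodesics\<close>

lemma geo_TM:
  assumes p: "p \<in> TM" and q: "q \<in> TM"
  shows "\<exists>c. c 0 = p \<and> c (td p q) = q \<and> (\<forall>t \<in> {0..td p q}. c t \<in> TM) \<and>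
     (\<forall>s \<in> {0..td p q}. \<forall>t \<in> {0..td p q}. td (c s) (c t) = \<bar>s - t\<bar>)"
proof -
  define g where "g = gp p q"
  define A where "A = fst p - g"
  define c where "c t = (if t \<le> A then seg (snd p) (fst p - t) else seg (snd q) (g + (t - A)))" for t
  have fa: "finite {i. snd p i}" and fb: "finite {i. snd q i}" using p q TM_fin by auto
  have g1: "g \<le> fst p" and g2: "g \<le> fst q" using gp_le1 gp_le2 by (auto simp: g_def)
  have D: "td p q = A + (fst q - g)" by (simp add: td_def A_def g_def)
  have cTM: "c t \<in> TM" for t by (simp add: c_def seg_TM fa fb)
  have branch: "seg (snd p) g = seg (snd q) g"
  proof -
    have "gp (seg (snd p) g) (seg (snd q) g) = g"
      using gp_seg_cross[OF p q] g1 g2 by (simp add: g_def)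
    hence "td (seg (snd p) g) (seg (snd q) g) = 0" by (simp add: td_def)
    thus ?thesis using td_zero seg_TM fa fb by blast
  qed
  have c0: "c 0 = p" using g1 seg_self[OF p] by (simp add: c_def A_def)
  have cd: "c (td p q) = q"
  proof (cases "td p q \<le> A")
    case True
    hence "fst q = g" using D g2 by simp
    thus ?thesis using True branch seg_self[OF q] by (simp add: c_def D A_def)
  next
    case False
    thus ?thesis using seg_self[OF q] by (simp add: c_def D)
  qed
  have cross: "td (c s) (c t) = t - s" if "0 \<le> s" "s \<le> A" "A < t" "t \<le> td p q" for s t
  proof -
    have "gp (seg (snd p) (fst p - s)) (seg (snd q) (g + (t - A))) = g"
      using gp_seg_cross[OF p q, of "fst p - s" "g + (t - A)"] that D g1 g2
      by (simp add: g_def A_def)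
    thus ?thesis using that by (simp add: c_def td_def A_def)
  qed
  have dist: "td (c s) (c t) = \<bar>s - t\<bar>" if "s \<in> {0..td p q}" "t \<in> {0..td p q}" for s t
  proof -
    consider "s \<le> A" "t \<le> A" | "A < s" "A < t" | "s \<le> A" "A < t" | "A < s" "t \<le> A" by linarith
    thus ?thesis
    proof cases
      case 1 thus ?thesis by (simp add: c_def td_seg fa)
    next
      case 2 thus ?thesis by (simp add: c_def td_seg fb)
    next
      case 3 thus ?thesis using cross[of s t] that by auto
    next
      case 4 thus ?thesis using cross[of t s] that td_sym[of "c s" "c t"] by auto
    qed
  qed
  show ?thesis using c0 cd cTM dist by blast
qed

lemma geodesic_XM: "geodesic_metric XM"
  unfolding geodesic_metric_def
proof (intro ballI)
  fix x y assume "x \<in> mspace XM" "y \<in> mspace XM"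
  then obtain p q where p: "p \<in> TM" "x = enc p" and q: "q \<in> TM" "y = enc q"
    by (auto elim!: XS_E)
  obtain c where c: "c 0 = p" "c (td p q) = q" "\<forall>t \<in> {0..td p q}. c t \<in> TM"
    "\<forall>s \<in> {0..td p q}. \<forall>t \<in> {0..td p q}. td (c s) (c t) = \<bar>s - t\<bar>"
    using geo_TM[OF p(1) q(1)] by blast
  show "\<exists>\<gamma>. \<gamma> 0 = x \<and> \<gamma> (mdist XM x y) = y \<and>
        (\<forall>t\<in>{0..mdist XM x y}. \<gamma> t \<in> mspace XM) \<and>
        (\<forall>s\<in>{0..mdist XM x y}. \<forall>t\<in>{0..mdist XM x y}. mdist XM (\<gamma> s) (\<gamma> t) = \<bar>s - t\<bar>)"
    by (rule exI[of _ "\<lambda>t. enc (c t)"]) (use p q c in \<open>auto simp: enc_XS\<close>)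
qed



lemma walk_Cons:
  "walk E (x # xs) \<longleftrightarrow> (xs = [] \<or> (E x (hd xs) \<and> walk E xs))"
proof (cases xs)
  case Nil thus ?thesis by (simp add: walk_def)
next
  case (Cons y ys)
  have "(\<forall>i. Suc i < length (x # y # ys) \<longrightarrow> E ((x # y # ys) ! i) ((x # y # ys) ! Suc i)) \<longleftrightarrow>
        E x y \<and> (\<forall>i. Suc i < length (y # ys) \<longrightarrow> E ((y # ys) ! i) ((y # ys) ! Suc i))"
  proof
    assume H: "\<forall>i. Suc i < length (x # y # ys) \<longrightarrow> E ((x # y # ys) ! i) ((x # y # ys) ! Suc i)"
    have "E x y" using H[rule_format, of 0] by simp
    moreover have "E ((y # ys) ! i) ((y # ys) ! Suc i)" if "Suc i < length (y # ys)" for i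
      using H[rule_format, of "Suc i"] that by simp
    ultimately show "E x y \<and> (\<forall>i. Suc i < length (y # ys) \<longrightarrow> E ((y # ys) ! i) ((y # ys) ! Suc i))"
      by blast
  next
    assume H: "E x y \<and> (\<forall>i. Suc i < length (y # ys) \<longrightarrow> E ((y # ys) ! i) ((y # ys) ! Suc i))"
    show "\<forall>i. Suc i < length (x # y # ys) \<longrightarrow> E ((x # y # ys) ! i) ((x # y # ys) ! Suc i)"
    proof (intro allI impI)
      fix i assume "Suc i < length (x # y # ys)"
      thus "E ((x # y # ys) ! i) ((x # y # ys) ! Suc i)"
        using H by (cases i) auto
    qed
  qed
  thus ?thesis using Cons by (simp add: walk_def)
qed

lemma no_cycle:
  fixes E :: "'v \<Rightarrow> 'v \<Rightarrow> bool" and ht :: "'v \<Rightarrow> real"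
  assumes sym: "\<And>u v. E u v \<Longrightarrow> E v u"
    and step: "\<And>u v. E u v \<Longrightarrow> \<bar>ht u - ht v\<bar> = 1"
    and down: "\<And>u v w. E u v \<Longrightarrow> E u w \<Longrightarrow> ht v = ht u - 1 \<Longrightarrow> ht w = ht u - 1 \<Longrightarrow> v = w"
  shows "\<not> (\<exists>p. walk E p \<and> distinct p \<and> length p \<ge> 3 \<and> E (last p) (hd p))"
proof
  assume "\<exists>p. walk E p \<and> distinct p \<and> length p \<ge> 3 \<and> E (last p) (hd p)"
  then obtain p where w: "walk E p" and d: "distinct p" and l: "length p \<ge> 3"
    and c: "E (last p) (hd p)" by blast
  define n where "n = length p"
  have pne: "p \<noteq> []" using l by auto
  have lastn: "last p = p ! (n - 1)" using pne by (simp add: last_conv_nth n_def)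
  have hdn: "hd p = p ! 0" using pne by (simp add: hd_conv_nth)
  define m where "m = Max (ht ` set p)"
  have "m \<in> ht ` set p" unfolding m_def using pne by (intro Max_in) auto
  then obtain j where j: "j < n" "ht (p ! j) = m" by (auto simp: in_set_conv_nth n_def)
  have mx: "ht (p ! i) \<le> ht (p ! j)" if "i < n" for i
  proof -
    have "p ! i \<in> set p" using that by (simp add: n_def)
    hence "ht (p ! i) \<le> m" unfolding m_def by (intro Max_ge) auto
    thus ?thesis using j by simp
  qed
  define a where "a = (if j + 1 < n then j + 1 else 0)"
  define b where "b = (if j = 0 then n - 1 else j - 1)"
  have an: "a < n" and bn: "b < n" using j l by (auto simp: a_def b_def n_def)
  have Ea: "E (p ! j) (p ! a)"
  proof (cases "j + 1 < n")
    case True thus ?thesis using w by (simp add: a_def walk_def n_def)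
  next
    case False
    hence "j = n - 1" using j by auto
    thus ?thesis using c False lastn hdn by (simp add: a_def)
  qed
  have Eb: "E (p ! j) (p ! b)"
  proof (cases "j = 0")
    case True thus ?thesis using c lastn hdn sym by (simp add: b_def)
  next
    case False
    have "Suc (j - 1) < n" using j False by simp
    hence "E (p ! (j - 1)) (p ! Suc (j - 1))" using w unfolding walk_def n_def by blast
    moreover have "Suc (j - 1) = j" using False by simp
    ultimately show ?thesis using False sym by (simp add: b_def)
  qed
  have ha: "ht (p ! a) = ht (p ! j) - 1" using step[OF Ea] mx[OF an] by linarith
  have hb: "ht (p ! b) = ht (p ! j) - 1" using step[OF Eb] mx[OF bn] by linarith
  have "p ! a = p ! b" using down[OF Ea Eb ha hb] .
  hence "a = b" using d an bn by (simp add: nth_eq_iff_index_eq n_def)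
  thus False using j l by (auto simp: a_def b_def n_def split: if_splits)
qed

section \<open>The tree of integer-height points\<close>

definition TV :: "pt set" where "TV = {p \<in> TM. fst p \<in> \<int>}"

definition V :: "real set" where "V = enc ` TV"

definition Ed :: "real \<Rightarrow> real \<Rightarrow> bool" where
  "Ed x y \<longleftrightarrow> x \<in> V \<and> y \<in> V \<and> Xd x y = 1"

lemma Xd_self[simp]: "Xd x x = 0" by (simp add: Xd_def td_self)

lemma V_XS: "V \<subseteq> XS" by (auto simp: V_def XS_def TV_def)

lemma gp_int: "fst p \<in> \<int> \<Longrightarrow> fst q \<in> \<int> \<Longrightarrow> gp p q \<in> \<int>"
  unfolding gp_def by (auto simp: min_def)

lemma td_int: "fst p \<in> \<int> \<Longrightarrow> fst q \<in> \<int> \<Longrightarrow> td p q \<in> \<int>"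
  unfolding td_def using gp_int by auto

lemma V_E: "x \<in> V \<Longrightarrow> (\<And>p. p \<in> TM \<Longrightarrow> fst p \<in> \<int> \<Longrightarrow> x = enc p \<Longrightarrow> P) \<Longrightarrow> P"
  by (auto simp: V_def TV_def)

lemma Ints_le_diff:
  assumes "(a::real) \<in> \<int>" "b \<in> \<int>" "a < b" shows "a \<le> b - 1"
proof -
  obtain m where m: "a = of_int m" using assms(1) by (rule Ints_cases)
  obtain k where k: "b = of_int k" using assms(2) by (rule Ints_cases)
  have "m < k" using assms(3) m k by simp
  hence "m \<le> k - 1" by simp
  hence "real_of_int m \<le> real_of_int (k - 1)" by (simp only: of_int_le_iff)
  thus ?thesis using m k by simp
qed

lemma nbr:
  assumes p: "p \<in> TM" "fst p \<in> \<int>" and q: "q \<in> TM" "fst q \<in> \<int>" and ne: "p \<noteq> q"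
  shows "\<exists>w. w \<in> TM \<and> fst w \<in> \<int> \<and> td p w = 1 \<and> td w q \<le> td p q - 1"
proof -
  have fp: "fin p" and fq: "fin q" using p q TM_fin by auto
  have gi: "gp p q \<in> \<int>" using gp_int p q by auto
  show ?thesis
  proof (cases "gp p q < fst p")
    case True
    define w where "w = seg (snd p) (fst p - 1)"
    have wT: "w \<in> TM" "fst w \<in> \<int>" using fp p by (auto simp: w_def seg_TM)
    have "td p w = 1" using td_seg[OF fp, of "fst p" "fst p - 1"] seg_self[OF p(1)]
      by (simp add: w_def)
    moreover have "gp p q \<le> fst p - 1" using Ints_le_diff[OF gi p(2) True] .
    hence "gp p q \<le> gp w q"
      using gp_ultra[of w p q] gp_seg[OF fp, of "fst p - 1" "fst p"] seg_self[OF p(1)]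
        wT TM_fin fp fq by (auto simp: w_def gp_sym)
    hence "td w q \<le> td p q - 1" by (simp add: td_def w_def)
    ultimately show ?thesis using wT by blast
  next
    case False
    hence g: "gp p q = fst p" using gp_le1[of p q] by simp
    have lt: "fst p < fst q"
    proof (rule ccontr)
      assume "\<not> fst p < fst q"
      hence "fst q = fst p" using gp_le2[of p q] g by simp
      hence "td p q = 0" using g by (simp add: td_def)
      thus False using td_zero p q ne by blast
    qed
    define w where "w = seg (snd q) (fst p + 1)"
    have wT: "w \<in> TM" "fst w \<in> \<int>" using fq p by (auto simp: w_def seg_TM)
    have le: "fst p + 1 \<le> fst q" using Ints_le_diff[OF p(2) q(2) lt] by simp
    have "td w q = fst q - fst p - 1"
      using td_seg[OF fq, of "fst p + 1" "fst q"] seg_self[OF q(1)] le by (simp add: w_def)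
    moreover have "td p q = fst q - fst p" using g by (simp add: td_def)
    moreover have "td p w = 1"
    proof -
      have "gp q w = fst p + 1"
        using gp_seg[OF fq, of "fst q" "fst p + 1"] seg_self[OF q(1)] le by (simp add: w_def)
      moreover have fw: "fin w" using wT TM_fin by blast
      moreover have "min (gp p q) (gp q w) \<le> gp p w" using gp_ultra[OF fp fq fw] .
      ultimately have "fst p \<le> gp p w" using g by simp
      hence "td p w \<le> 1" by (simp add: td_def w_def)
      moreover have "1 \<le> td p w" using td_ge_abs[of p w] by (simp add: w_def)
      ultimately show ?thesis by simp
    qed
    ultimately show ?thesis using wT by (intro exI[of _ w]) simp
  qed
qed

lemma walk_lower:
  "walk Ed p \<Longrightarrow> hd p \<in> V \<Longrightarrow> last p \<in> V \<and> Xd (hd p) (last p) \<le> real (length p - 1)"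
proof (induction p)
  case Nil thus ?case by (simp add: walk_def)
next
  case (Cons x xs)
  show ?case
  proof (cases "xs = []")
    case True
    thus ?thesis using Cons.prems Metric_space.zero[OF Metric_X] V_XS by auto
  next
    case False
    have e: "Ed x (hd xs)" and wx: "walk Ed xs" using Cons.prems(1) False by (auto simp: walk_Cons)
    hence hv: "hd xs \<in> V" and xv: "x \<in> V" and d1: "Xd x (hd xs) = 1" by (auto simp: Ed_def)
    have IH: "last xs \<in> V \<and> Xd (hd xs) (last xs) \<le> real (length xs - 1)" using Cons.IH wx hv by blast
    have "Xd x (last xs) \<le> Xd x (hd xs) + Xd (hd xs) (last xs)"
      using Metric_space.triangle[OF Metric_X] xv hv IH V_XS by blast
    moreover have "length xs \<ge> 1" using False by (cases xs) auto
    ultimately show ?thesis using IH d1 False by (simp add: of_nat_diff)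
  qed
qed

lemma walk_exists:
  "x \<in> V \<Longrightarrow> y \<in> V \<Longrightarrow> Xd x y \<le> real n \<Longrightarrow>
     \<exists>p. walk Ed p \<and> hd p = x \<and> last p = y \<and> length p \<le> Suc n"
proof (induction n arbitrary: x)
  case 0
  hence "Xd x y = 0" using Metric_space.nonneg[OF Metric_X, of x y] by simp
  hence "x = y" using 0 V_XS Metric_space.zero[OF Metric_X] by blast
  thus ?case by (intro exI[of _ "[x]"]) (simp add: walk_def)
next
  case (Suc n)
  show ?case
  proof (cases "x = y")
    case True thus ?thesis by (intro exI[of _ "[x]"]) (simp add: walk_def)
  next
    case False
    obtain p where p: "p \<in> TM" "fst p \<in> \<int>" "x = enc p" using Suc.prems(1) by (rule V_E)
    obtain q where q: "q \<in> TM" "fst q \<in> \<int>" "y = enc q" using Suc.prems(2) by (rule V_E)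
    have "p \<noteq> q" using False p q by auto
    then obtain w where w: "w \<in> TM" "fst w \<in> \<int>" "td p w = 1" "td w q \<le> td p q - 1"
      using nbr p q by blast
    have wV: "enc w \<in> V" using w by (auto simp: V_def TV_def)
    have E1: "Ed x (enc w)" using Suc.prems(1) wV w p by (simp add: Ed_def)
    have "Xd (enc w) y \<le> real n" using w p q Suc.prems(3) by simp
    then obtain r where r: "walk Ed r" "hd r = enc w" "last r = y" "length r \<le> Suc n"
      using Suc.IH[OF wV Suc.prems(2)] by blast
    have "r \<noteq> []" using r(1) by (simp add: walk_def)
    thus ?thesis using r E1
      by (intro exI[of _ "x # r"]) (simp add: walk_Cons)
  qed
qed

lemma Xd_V_nat:
  assumes "x \<in> V" "y \<in> V" shows "Xd x y = real (nat \<lfloor>Xd x y\<rfloor>)"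
proof -
  obtain p where p: "p \<in> TM" "fst p \<in> \<int>" "x = enc p" using assms(1) by (rule V_E)
  obtain q where q: "q \<in> TM" "fst q \<in> \<int>" "y = enc q" using assms(2) by (rule V_E)
  have "Xd x y \<in> \<int>" using td_int p q by simp
  moreover have "Xd x y \<ge> 0" by (rule Metric_space.nonneg[OF Metric_X])
  ultimately obtain k where k: "Xd x y = of_int k" "0 \<le> k" by (auto elim!: Ints_cases)
  thus ?thesis by simp
qed

lemma graph_dist_V:
  assumes "x \<in> V" "y \<in> V" shows "graph_dist Ed x y = Xd x y"
proof -
  define k where "k = nat \<lfloor>Xd x y\<rfloor>"
  have xk: "Xd x y = real k" using Xd_V_nat[OF assms] by (simp add: k_def)
  obtain p where p: "walk Ed p" "hd p = x" "last p = y" "length p \<le> Suc k"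
    using walk_exists[OF assms] xk by auto
  have "real k \<le> real (length p - 1)" using walk_lower[OF p(1)] p assms xk by simp
  hence "length p = Suc k" using p(4) p(1) by (cases p) (auto simp: walk_def)
  hence Pk: "\<exists>p. walk Ed p \<and> length p = Suc k \<and> hd p = x \<and> last p = y" using p by blast
  have "(LEAST n. \<exists>p. walk Ed p \<and> length p = Suc n \<and> hd p = x \<and> last p = y) = k"
  proof (rule Least_equality)
    show "\<exists>p. walk Ed p \<and> length p = Suc k \<and> hd p = x \<and> last p = y" by (rule Pk)
  next
    fix m assume "\<exists>p. walk Ed p \<and> length p = Suc m \<and> hd p = x \<and> last p = y"
    then obtain r where "walk Ed r" "length r = Suc m" "hd r = x" "last r = y" by blast
    hence "real k \<le> real m" using walk_lower[of r] assms xk by auto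
    thus "k \<le> m" by simp
  qed
  thus ?thesis using xk by (simp add: graph_dist_def)
qed

lemma tree_V: "simplicial_tree V Ed"
  unfolding simplicial_tree_def
proof (intro conjI)
  have "seg (\<lambda>i. False) 0 \<in> TV" by (simp add: TV_def seg_TM)
  thus "V \<noteq> {}" by (auto simp: V_def)
next
  show "\<forall>u v. Ed u v \<longrightarrow> u \<in> V \<and> v \<in> V \<and> u \<noteq> v \<and> Ed v u"
    using Metric_space.zero[OF Metric_X] Metric_space.commute[OF Metric_X] V_XS
    by (auto simp: Ed_def)
next
  show "\<forall>u\<in>V. \<forall>v\<in>V. \<exists>p. walk Ed p \<and> hd p = u \<and> last p = v"
  proof (intro ballI)
    fix u v assume "u \<in> V" "v \<in> V"
    thus "\<exists>p. walk Ed p \<and> hd p = u \<and> last p = v"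
      using walk_exists[of u v "nat \<lceil>Xd u v\<rceil>"] by (meson real_nat_ceiling_ge)
  qed
next
  define ht where "ht x = fst (dec x)" for x
  show "\<not> (\<exists>p. walk Ed p \<and> distinct p \<and> length p \<ge> 3 \<and> Ed (last p) (hd p))"
  proof (rule no_cycle[where ht = ht])
    show "Ed v u" if "Ed u v" for u v
      using that Metric_space.commute[OF Metric_X] by (auto simp: Ed_def)
  next
    fix u v assume e: "Ed u v"
    obtain p where p: "p \<in> TM" "fst p \<in> \<int>" "u = enc p" using e by (auto simp: Ed_def elim: V_E)
    obtain q where q: "q \<in> TM" "fst q \<in> \<int>" "v = enc q" using e by (auto simp: Ed_def elim: V_E)
    have d: "td p q = 1" using e p q by (simp add: Ed_def)
    have gi: "gp p q \<in> \<int>" using gp_int p q by auto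
    have ab: "\<bar>fst p - fst q\<bar> \<le> 1" using td_ge_abs[of p q] d by simp
    have "fst p \<noteq> fst q"
    proof
      assume eq: "fst p = fst q"
      hence "2 * (fst p - gp p q) = 1" using d by (simp add: td_def)
      moreover have "fst p - gp p q \<in> \<int>" using gi p by simp
      then obtain m where m: "fst p - gp p q = of_int m" by (rule Ints_cases)
      ultimately have "real_of_int (2 * m) = real_of_int 1" by simp
      hence "2 * m = 1" by (simp only: of_int_eq_iff)
      thus False by presburger
    qed
    hence "\<bar>fst p - fst q\<bar> \<ge> 1"
      using Ints_le_diff[OF p(2) q(2)] Ints_le_diff[OF q(2) p(2)] by (cases "fst p < fst q") auto
    thus "\<bar>ht u - ht v\<bar> = 1" using ab p q by (simp add: ht_def)
  next
    fix u v w assume e1: "Ed u v" and e2: "Ed u w" and h1: "ht v = ht u - 1" and h2: "ht w = ht u - 1"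
    obtain p where p: "p \<in> TM" "fst p \<in> \<int>" "u = enc p" using e1 by (auto simp: Ed_def elim: V_E)
    obtain q where q: "q \<in> TM" "fst q \<in> \<int>" "v = enc q" using e1 by (auto simp: Ed_def elim: V_E)
    obtain r where r: "r \<in> TM" "fst r \<in> \<int>" "w = enc r" using e2 by (auto simp: Ed_def elim: V_E)
    have fq: "fst q = fst p - 1" and fr: "fst r = fst p - 1" using h1 h2 p q r by (auto simp: ht_def)
    have "td p q = 1" "td p r = 1" using e1 e2 p q r by (auto simp: Ed_def)
    hence g1: "gp p q = fst p - 1" and g2: "gp p r = fst p - 1" using fq fr by (auto simp: td_def)
    have "min (gp q p) (gp p r) \<le> gp q r" using gp_ultra[of q p r] p q r TM_fin by blast
    hence "fst p - 1 \<le> gp q r" using g1 g2 gp_sym[of q p] by simp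
    hence "td q r \<le> 0" using fq fr by (simp add: td_def)
    hence "td q r = 0" using td_nonneg[of q r] by simp
    hence "q = r" using td_zero q r by blast
    thus "v = w" using q r by simp
  qed
qed

definition rnd :: "pt \<Rightarrow> pt" where "rnd p = seg (snd p) (of_int \<lceil>fst p\<rceil>)"

lemma rnd_TV: "p \<in> TM \<Longrightarrow> rnd p \<in> TV"
  by (simp add: rnd_def TV_def seg_TM TM_fin)

lemma td_rnd: "p \<in> TM \<Longrightarrow> td p (rnd p) \<le> 1"
  using td_seg[OF TM_fin, of p "fst p" "of_int \<lceil>fst p\<rceil>"] seg_self[of p]
  by (simp add: rnd_def) linarith

lemma rnd_id: "p \<in> TM \<Longrightarrow> fst p \<in> \<int> \<Longrightarrow> rnd p = p"
  using seg_self[of p] by (auto simp: rnd_def elim!: Ints_cases)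

lemma qi_XM: "quasi_isometric XS Xd V (graph_dist Ed)"
  unfolding quasi_isometric_def
proof (intro exI conjI)
  define f where "f x = enc (rnd (dec x))" for x
  show "f ` XS \<subseteq> V" using rnd_TV dec_XS unfolding f_def V_def by blast
  show "(1::real) \<ge> 1" "(2::real) \<ge> 0" by simp_all
  show "\<forall>x\<in>XS. \<forall>y\<in>XS. Xd x y / 1 - 2 \<le> graph_dist Ed (f x) (f y) \<and>
          graph_dist Ed (f x) (f y) \<le> 1 * Xd x y + 2"
  proof (intro ballI)
    fix x y assume x: "x \<in> XS" and y: "y \<in> XS"
    define p where "p = dec x"
    define q where "q = dec y"
    have p: "p \<in> TM" and q: "q \<in> TM" using x y dec_XS by (auto simp: p_def q_def)
    have rp: "rnd p \<in> TM" and rq: "rnd q \<in> TM" using rnd_TV p q by (auto simp: TV_def)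
    have fV: "f x \<in> V" "f y \<in> V" using rnd_TV p q by (auto simp: f_def V_def p_def q_def)
    have gd: "graph_dist Ed (f x) (f y) = td (rnd p) (rnd q)"
      using graph_dist_V[OF fV] rp rq by (simp add: f_def p_def q_def)
    have xy: "Xd x y = td p q" by (simp add: Xd_def p_def q_def)
    have t1: "td p q \<le> td p (rnd p) + td (rnd p) q" using td_triangle p rp q TM_fin by blast
    have t2: "td (rnd p) q \<le> td (rnd p) (rnd q) + td (rnd q) q" using td_triangle rp rq q TM_fin by blast
    have t3: "td (rnd p) (rnd q) \<le> td (rnd p) p + td p (rnd q)" using td_triangle rp rq p TM_fin by blast
    have t4: "td p (rnd q) \<le> td p q + td q (rnd q)" using td_triangle rq q p TM_fin by blast
    have b1: "td p (rnd p) \<le> 1" "td q (rnd q) \<le> 1" using td_rnd p q by auto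
    show "Xd x y / 1 - 2 \<le> graph_dist Ed (f x) (f y) \<and> graph_dist Ed (f x) (f y) \<le> 1 * Xd x y + 2"
      using t1 t2 t3 t4 b1 gd xy td_sym[of p "rnd p"] td_sym[of q "rnd q"] by simp
  qed
  show "\<forall>z\<in>V. \<exists>x\<in>XS. graph_dist Ed z (f x) \<le> 2"
  proof
    fix z assume z: "z \<in> V"
    obtain p where p: "p \<in> TM" "fst p \<in> \<int>" "z = enc p" using z by (rule V_E)
    have "f z = z" using p rnd_id by (simp add: f_def)
    hence "graph_dist Ed z (f z) = 0" using graph_dist_V[OF z z] Metric_space.zero[OF Metric_X] z V_XS
      by auto
    thus "\<exists>x\<in>XS. graph_dist Ed z (f x) \<le> 2" using z V_XS by force
  qed
qed

lemma quasi_tree_XM: "quasi_tree XM"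
  unfolding quasi_tree_def using geodesic_XM tree_V qi_XM by auto



lemma group_actionI':
  assumes G: "group G"
    and ext: "\<And>g. g \<in> carrier G \<Longrightarrow> \<phi> g \<in> extensional E"
    and cl: "\<And>g x. g \<in> carrier G \<Longrightarrow> x \<in> E \<Longrightarrow> \<phi> g x \<in> E"
    and one: "\<And>x. x \<in> E \<Longrightarrow> \<phi> \<one>\<^bsub>G\<^esub> x = x"
    and mult: "\<And>g h x. g \<in> carrier G \<Longrightarrow> h \<in> carrier G \<Longrightarrow> x \<in> E \<Longrightarrow>
                 \<phi> (g \<otimes>\<^bsub>G\<^esub> h) x = \<phi> g (\<phi> h x)"
  shows "group_action G E \<phi>"
proof -
  have bij: "\<phi> g \<in> Bij E" if g: "g \<in> carrier G" for g
  proof -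
    have ig: "inv\<^bsub>G\<^esub> g \<in> carrier G" using G g by (simp add: group.inv_closed)
    have l: "\<phi> (inv\<^bsub>G\<^esub> g) (\<phi> g x) = x" if "x \<in> E" for x
      using mult[OF ig g that] one[OF that] group.l_inv[OF G g] by simp
    have r: "\<phi> g (\<phi> (inv\<^bsub>G\<^esub> g) x) = x" if "x \<in> E" for x
      using mult[OF g ig that] one[OF that] group.r_inv[OF G g] by simp
    have "bij_betw (\<phi> g) E E"
      by (rule bij_betw_byWitness[where f' = "\<phi> (inv\<^bsub>G\<^esub> g)"]) (use l r cl g ig in auto)
    thus ?thesis using ext[OF g] by (simp add: Bij_def)
  qed
  have hom: "\<phi> \<in> hom G (BijGroup E)"
  proof (rule homI)
    fix g assume "g \<in> carrier G"
    thus "\<phi> g \<in> carrier (BijGroup E)" using bij by (simp add: BijGroup_def)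
  next
    fix g h assume g: "g \<in> carrier G" and h: "h \<in> carrier G"
    have gh: "g \<otimes>\<^bsub>G\<^esub> h \<in> carrier G" using G g h by (simp add: group.is_monoid monoid.m_closed)
    have "\<phi> (g \<otimes>\<^bsub>G\<^esub> h) = compose E (\<phi> g) (\<phi> h)"
    proof
      fix x show "\<phi> (g \<otimes>\<^bsub>G\<^esub> h) x = compose E (\<phi> g) (\<phi> h) x"
      proof (cases "x \<in> E")
        case True thus ?thesis using mult[OF g h True] by (simp add: compose_def)
      next
        case False thus ?thesis using ext[OF gh] by (simp add: compose_def extensional_def)
      qed
    qed
    thus "\<phi> (g \<otimes>\<^bsub>G\<^esub> h) = \<phi> g \<otimes>\<^bsub>BijGroup E\<^esub> \<phi> h"
      using bij[OF g] bij[OF h] by (simp add: BijGroup_def)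
  qed
  show ?thesis
    unfolding group_action_def group_hom_def group_hom_axioms_def
    using G group_BijGroup hom by blast
qed

definition phi :: "(int \<Rightarrow> bool) \<times> int \<Rightarrow> real \<Rightarrow> real" where
  "phi g = (\<lambda>x\<in>XS. enc (act g (dec x)))"

definition phi2 :: "(int \<Rightarrow> bool) \<times> int \<Rightarrow> real \<Rightarrow> real" where
  "phi2 g = phi (sig g)"

lemma phi_enc: "p \<in> TM \<Longrightarrow> phi g (enc p) = enc (act g p)"
  by (simp add: phi_def enc_XS)

lemma phi_XS: "g \<in> carrier lamplighter \<Longrightarrow> x \<in> XS \<Longrightarrow> phi g x \<in> XS"
  by (simp add: phi_def enc_XS act_TM dec_XS LL_carrier)

lemma phi_iso:
  assumes "g \<in> carrier lamplighter" "x \<in> XS" "y \<in> XS"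
  shows "Xd (phi g x) (phi g y) = Xd x y"
proof -
  have fg: "finite {i. fst g i}" using assms(1) by (simp add: LL_carrier)
  have "dec x \<in> TM" "dec y \<in> TM" using assms dec_XS by auto
  thus ?thesis using assms fg act_TM td_act TM_fin by (simp add: phi_def Xd_def)
qed

lemma ga_phi: "group_action lamplighter XS phi"
proof (rule group_actionI'[OF LL_group])
  show "phi g \<in> extensional XS" for g by (simp add: phi_def)
  show "phi g x \<in> XS" if "g \<in> carrier lamplighter" "x \<in> XS" for g x using phi_XS that .
  show "phi \<one>\<^bsub>lamplighter\<^esub> x = x" if "x \<in> XS" for x
    using that act_LL_one dec_XS enc_dec by (simp add: phi_def)
  show "phi (g \<otimes>\<^bsub>lamplighter\<^esub> h) x = phi g (phi h x)"
    if "g \<in> carrier lamplighter" "h \<in> carrier lamplighter" "x \<in> XS" for g h x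
    using that act_mult act_TM dec_XS by (simp add: phi_def enc_XS LL_carrier)
qed

lemma ga_phi2: "group_action lamplighter XS phi2"
proof (rule group_actionI'[OF LL_group])
  show "phi2 g \<in> extensional XS" for g by (simp add: phi2_def phi_def)
  show "phi2 g x \<in> XS" if "g \<in> carrier lamplighter" "x \<in> XS" for g x
    using phi_XS sig_carrier that by (simp add: phi2_def)
  show "phi2 \<one>\<^bsub>lamplighter\<^esub> x = x" if "x \<in> XS" for x
    using that act_LL_one dec_XS enc_dec by (simp add: phi2_def phi_def sig_one)
  show "phi2 (g \<otimes>\<^bsub>lamplighter\<^esub> h) x = phi2 g (phi2 h x)"
    if "g \<in> carrier lamplighter" "h \<in> carrier lamplighter" "x \<in> XS" for g h x
    using that sig_carrier act_mult act_TM dec_XS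
    by (simp add: phi2_def phi_def enc_XS LL_carrier sig_mult)
qed

lemma iso_phi: "isometric_action lamplighter XM phi"
  unfolding isometric_action_def using ga_phi phi_iso by simp

lemma iso_phi2: "isometric_action lamplighter XM phi2"
  unfolding isometric_action_def using ga_phi2 phi_iso sig_carrier by (simp add: phi2_def)

section \<open>Cocompactness\<close>

definition K0 :: "real set" where "K0 = (\<lambda>s. enc (seg (\<lambda>i. False) s)) ` {-1..0}"

lemma K0_compact: "compactin (mtopology_of XM) K0"
  unfolding K0_def by (rule seg_compact) simp

lemma K0_XS: "K0 \<subseteq> XS"
  by (auto simp: K0_def enc_XS seg_TM)

lemma act_zero:
  assumes p: "p \<in> TM"
  shows "act (snd p, \<lceil>fst p\<rceil>) (seg (\<lambda>i. False) (fst p - of_int \<lceil>fst p\<rceil>)) = p"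
  using TM_lt[OF p] by (auto simp: act_def seg_def prod_eq_iff)

lemma cover:
  assumes x: "x \<in> XS"
  shows "\<exists>g \<in> carrier lamplighter. x \<in> phi g ` K0"
proof -
  obtain p where p: "p \<in> TM" "x = enc p" using x by (rule XS_E)
  define s where "s = fst p - of_int \<lceil>fst p\<rceil>"
  have s: "s \<in> {-1..0}" unfolding s_def by (simp add: algebra_simps) linarith
  have g: "(snd p, \<lceil>fst p\<rceil>) \<in> carrier lamplighter" using p TM_fin by (simp add: LL_carrier)
  have "phi (snd p, \<lceil>fst p\<rceil>) (enc (seg (\<lambda>i. False) s)) = x"
    using p act_zero[OF p(1)] by (simp add: phi_enc seg_TM s_def)
  moreover have "enc (seg (\<lambda>i. False) s) \<in> K0" using s by (simp add: K0_def)
  ultimately show ?thesis using g by blast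
qed

lemma cocompact_phi: "cocompact_action lamplighter XM phi"
  unfolding cocompact_action_def
proof (intro exI conjI)
  show "compactin (mtopology_of XM) K0" by (rule K0_compact)
  show "(\<Union>g\<in>carrier lamplighter. phi g ` K0) = mspace XM"
    using cover phi_XS K0_XS by fastforce
qed

lemma cocompact_phi2: "cocompact_action lamplighter XM phi2"
  unfolding cocompact_action_def
proof (intro exI conjI)
  show "compactin (mtopology_of XM) K0" by (rule K0_compact)
  have "x \<in> (\<Union>g\<in>carrier lamplighter. phi2 g ` K0)" if xS: "x \<in> XS" for x
  proof -
    obtain g where g: "g \<in> carrier lamplighter" "x \<in> phi g ` K0" using cover[OF xS] by blast
    hence "sig g \<in> carrier lamplighter" "x \<in> phi2 (sig g) ` K0" using sig_carrier
      by (auto simp: phi2_def)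
    thus ?thesis by blast
  qed
  moreover have "phi2 g ` K0 \<subseteq> XS" if gc: "g \<in> carrier lamplighter" for g
  proof
    fix y assume "y \<in> phi2 g ` K0"
    then obtain k where "k \<in> K0" "y = phi (sig g) k" by (auto simp: phi2_def)
    thus "y \<in> XS" using phi_XS[OF sig_carrier[OF gc]] K0_XS by blast
  qed
  ultimately show "(\<Union>g\<in>carrier lamplighter. phi2 g ` K0) = mspace XM"
    unfolding XM_space by blast
qed

section \<open>Properness\<close>

definition base :: pt where "base = (0, \<lambda>i. False)"

lemma base_TM: "base \<in> TM" by (simp add: base_def TM_def)

lemma base_fst[simp]: "fst base = 0" by (simp add: base_def)
lemma base_snd[simp]: "snd base = (\<lambda>i. False)" by (simp add: base_def)

lemma act_base: "act (f, n) base = (of_int n, \<lambda>i. real_of_int i < of_int n \<and> f i)"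
  by (simp add: act_def base_def)

lemma bound1:
  assumes fg: "finite {i. f i}" and i: "f i" "i < n"
  shows "real_of_int n - 2 * real_of_int i \<le> td base (act (f, n) base)"
proof -
  have f1: "fin base" by simp
  have f2: "fin (act (f, n) base)" by (rule act_fin) (use fg f1 in auto)
  have "snd base i \<noteq> snd (act (f, n) base) i" using i by (simp add: act_base)
  hence "gp base (act (f, n) base) \<le> of_int i" by (rule gp_diff[OF f1 f2])
  thus ?thesis by (simp add: td_def act_base)
qed

lemma bound_main:
  assumes g: "(f, n) \<in> carrier lamplighter"
    and R: "td base (act (f, n) base) + td base (act (sig (f, n)) base) \<le> R"
  shows "(\<forall>i. f i \<longrightarrow> - R \<le> real_of_int i \<and> real_of_int i \<le> R) \<and>
         - R \<le> real_of_int n \<and> real_of_int n \<le> R"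
proof -
  have fg: "finite {i. f i}" using g by (simp add: LL_carrier)
  have sg: "finite {i. f (- i)}" using sig_carrier[OF g] by (simp add: LL_carrier sig_def)
  define d1 where "d1 = td base (act (f, n) base)"
  define d2 where "d2 = td base (act (sig (f, n)) base)"
  have "\<bar>real_of_int n\<bar> \<le> d1" using td_ge_abs[of base "act (f, n) base"]
    by (simp add: d1_def)
  hence n1: "- d1 \<le> real_of_int n" "real_of_int n \<le> d1" by (simp_all add: abs_le_iff)
  have "\<bar>real_of_int n\<bar> \<le> d2" using td_ge_abs[of base "act (sig (f, n)) base"]
    by (simp add: d2_def sig_def)
  hence n2: "- d2 \<le> real_of_int n" "real_of_int n \<le> d2" by (simp_all add: abs_le_iff)
  have nn: "0 \<le> d1" "0 \<le> d2" by (simp_all add: d1_def d2_def td_nonneg)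
  have R': "d1 + d2 \<le> R" using R by (simp add: d1_def d2_def)
  have "- R \<le> real_of_int i \<and> real_of_int i \<le> R" if fi: "f i" for i
  proof -
    consider "i < n" | "i = n" | "n < i" by linarith
    thus ?thesis
    proof cases
      case 1
      have "real_of_int n - 2 * real_of_int i \<le> d1" using bound1[OF fg fi 1] by (simp add: d1_def)
      moreover have "real_of_int i < real_of_int n" using 1 by simp
      ultimately show ?thesis using n1 nn R' by linarith
    next
      case 2 thus ?thesis using n1 nn R' by simp
    next
      case 3
      have "f (- (- i))" using fi by simp
      hence "real_of_int (- n) - 2 * real_of_int (- i) \<le> d2"
        using bound1[OF sg, of "- i" "- n"] 3 by (simp add: d2_def sig_def)
      moreover have "real_of_int n < real_of_int i" using 3 by simp
      ultimately show ?thesis using n2 nn R' by linarith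
    qed
  qed
  hence "\<forall>i. f i \<longrightarrow> - R \<le> real_of_int i \<and> real_of_int i \<le> R" by blast
  moreover have "- R \<le> real_of_int n" "real_of_int n \<le> R" using n1 nn R' by linarith+
  ultimately show ?thesis by blast
qed

lemma finite_bounded_LL:
  "finite {g :: (int \<Rightarrow> bool) \<times> int. (\<forall>i. fst g i \<longrightarrow> - R \<le> real_of_int i \<and> real_of_int i \<le> R) \<and>
      - R \<le> real_of_int (snd g) \<and> real_of_int (snd g) \<le> R}"
proof -
  define I where "I = {i :: int. - R \<le> real_of_int i \<and> real_of_int i \<le> R}"
  have fI: "finite I" unfolding I_def by (rule finite_int_range)
  have "{g :: (int \<Rightarrow> bool) \<times> int. (\<forall>i. fst g i \<longrightarrow> - R \<le> real_of_int i \<and> real_of_int i \<le> R) \<and>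
      - R \<le> real_of_int (snd g) \<and> real_of_int (snd g) \<le> R} \<subseteq>
      (\<lambda>(S, n). ((\<lambda>i. i \<in> S), n)) ` (Pow I \<times> I)"
  proof
    fix g :: "(int \<Rightarrow> bool) \<times> int"
    assume H: "g \<in> {g. (\<forall>i. fst g i \<longrightarrow> - R \<le> real_of_int i \<and> real_of_int i \<le> R) \<and>
      - R \<le> real_of_int (snd g) \<and> real_of_int (snd g) \<le> R}"
    have "g = (\<lambda>(S, n). ((\<lambda>i. i \<in> S), n)) ({i. fst g i}, snd g)" by simp
    moreover have "({i. fst g i}, snd g) \<in> Pow I \<times> I" using H by (auto simp: I_def)
    ultimately show "g \<in> (\<lambda>(S, n). ((\<lambda>i. i \<in> S), n)) ` (Pow I \<times> I)" by blast
  qed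
  thus ?thesis using fI finite_subset by blast
qed

lemma displacement:
  assumes iso: "\<And>x y. x \<in> XS \<Longrightarrow> y \<in> XS \<Longrightarrow> Xd (\<psi> x) (\<psi> y) = Xd x y"
    and cl: "\<And>x. x \<in> XS \<Longrightarrow> \<psi> x \<in> XS"
    and ob: "ob \<in> XS" and z: "z \<in> XS"
  shows "Xd ob (\<psi> ob) \<le> Xd z (\<psi> z) + 2 * Xd ob z"
proof -
  have "Xd ob (\<psi> ob) \<le> Xd ob z + Xd z (\<psi> ob)"
    using Metric_space.triangle[OF Metric_X] ob z cl by blast
  also have "Xd z (\<psi> ob) \<le> Xd z (\<psi> z) + Xd (\<psi> z) (\<psi> ob)"
    using Metric_space.triangle[OF Metric_X] ob z cl by blast
  also have "Xd (\<psi> z) (\<psi> ob) = Xd ob z"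
    using iso[OF z ob] Metric_space.commute[OF Metric_X] by simp
  finally show ?thesis by simp
qed

definition Phi :: "nat \<Rightarrow> (int \<Rightarrow> bool) \<times> int \<Rightarrow> real \<Rightarrow> real" where
  "Phi i = (if i = 0 then phi else phi2)"

lemma proper_diag:
  assumes z: "\<forall>i < 2. z i \<in> mspace XM" and r: "r > 0"
  shows "finite {g \<in> carrier lamplighter. (\<Sum>i < 2. mdist XM (z i) (Phi i g (z i))) \<le> r}"
proof -
  have z0: "z 0 \<in> XS" and z1: "z 1 \<in> XS" using z by auto
  define ob where "ob = enc base"
  have ob: "ob \<in> XS" by (simp add: ob_def enc_XS base_TM)
  define R where "R = r + 2 * Xd ob (z 0) + 2 * Xd ob (z 1)"
  have "{g \<in> carrier lamplighter. (\<Sum>i < 2. mdist XM (z i) (Phi i g (z i))) \<le> r} \<subseteq>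
        {g. (\<forall>i. fst g i \<longrightarrow> - R \<le> real_of_int i \<and> real_of_int i \<le> R) \<and>
            - R \<le> real_of_int (snd g) \<and> real_of_int (snd g) \<le> R}"
  proof
    fix g assume "g \<in> {g \<in> carrier lamplighter. (\<Sum>i < 2. mdist XM (z i) (Phi i g (z i))) \<le> r}"
    hence g: "g \<in> carrier lamplighter" and s: "Xd (z 0) (phi g (z 0)) + Xd (z 1) (phi2 g (z 1)) \<le> r"
      by (auto simp: Phi_def numeral_2_eq_2)
    have sg: "sig g \<in> carrier lamplighter" using sig_carrier[OF g] .
    have d1: "Xd ob (phi g ob) \<le> Xd (z 0) (phi g (z 0)) + 2 * Xd ob (z 0)"
      by (rule displacement[OF _ _ ob z0]) (use phi_iso phi_XS g in auto)
    have d2: "Xd ob (phi2 g ob) \<le> Xd (z 1) (phi2 g (z 1)) + 2 * Xd ob (z 1)"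
      by (rule displacement[OF _ _ ob z1]) (use phi_iso phi_XS sg in \<open>auto simp: phi2_def\<close>)
    have e1: "Xd ob (phi g ob) = td base (act g base)"
      using g base_TM act_TM by (simp add: ob_def phi_enc LL_carrier)
    have e2: "Xd ob (phi2 g ob) = td base (act (sig g) base)"
      using sg base_TM act_TM by (simp add: ob_def phi2_def phi_enc LL_carrier)
    obtain f n where gfn: "g = (f, n)" by (cases g)
    have "td base (act (f, n) base) + td base (act (sig (f, n)) base) \<le> R"
      using d1 d2 e1 e2 s gfn by (simp add: R_def)
    from bound_main[OF g[unfolded gfn] this]
    show "g \<in> {g. (\<forall>i. fst g i \<longrightarrow> - R \<le> real_of_int i \<and> real_of_int i \<le> R) \<and>
            - R \<le> real_of_int (snd g) \<and> real_of_int (snd g) \<le> R}" using gfn by simp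
  qed
  thus ?thesis using finite_bounded_LL finite_subset by blast
qed

theorem lemma3p15:
  shows "PPT lamplighter"
  unfolding PPT_def
proof (intro exI conjI)
  show "\<forall>i < 2. unbounded_metric XM \<and> proper_metric XM \<and> quasi_tree XM \<and>
      isometric_action lamplighter XM (Phi i) \<and> cocompact_action lamplighter XM (Phi i)"
    using unbounded_XM proper_XM quasi_tree_XM iso_phi iso_phi2 cocompact_phi cocompact_phi2
    by (simp add: Phi_def)
  show "\<forall>z. (\<forall>i < 2. z i \<in> mspace XM) \<longrightarrow> (\<forall>r > 0.
        finite {g \<in> carrier lamplighter. (\<Sum>i < 2. mdist XM (z i) (Phi i g (z i))) \<le> r})"
    using proper_diag by blast
qed

end
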